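(* In the setting of the context, for any $n\ge N_p$ and $x\ge1$, letting $r_0=n^\eta+2\big(R+\frac{\exp(2\beta R)-1}{2\beta}\big)(K-1)(3+A(n))$, it holds that $$\mathbb{P}[n\bar\rho_n-n\mu^*\ge r_0x]\le\frac{\theta}{x^\xi}+\frac{2(K-1)}{(\alpha-1)\big((1+A(n))x\big)^{\alpha-1}},$$ $$\mathbb{P}[n\bar\rho_n-n\mu^*\le -r_0x]\le\frac{\theta}{x^\xi}+\frac{2(K-1)}{(\alpha-1)\big((1+A(n))x\big)^{\alpha-1}}.$$
   Context: Bandit with $K$ arms; for each arm $i$ a sequence of (possibly non-stationary) random costs $(x_{i,t})_{t\ge1}$ in $[-R,R]$, $x_{i,t}$ being the cost at the $t$-th pull of arm $i$. Fix $\beta>0$, $\hat\rho_{i,n}=\frac1\beta\ln(\frac1n\sum_{t=1}^n e^{\beta x_{i,t}})$, $\mu_{i,n}=\mathbb{E}[\hat\rho_{i,n}]$. Assumption: for every $i$, $\lim_n\mu_{i,n}=\mu_i$ exists and for all $z\ge1$, $n\in\mathbb{N}$: $\mathbb{P}[n\hat\rho_{i,n}-n\mu_i\ge n^\eta z]\le\theta/z^\xi$ and $\mathbb{P}[n\hat\rho_{i,n}-n\mu_i\le -n^\eta z]\le\theta/z^\xi$, with $\xi>1$, $1/2\le\eta<1$, and $\theta>1$ large enough that $2\theta^{1/\xi}/\Delta_{\min}>1$. There is a unique arm $i^*$ attaining $\mu^*=\min_i\mu_i$; $\Delta_i=\mu_i-\mu^*$, $\Delta_{\min}=\min_{i\ne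 i^*}\Delta_i$. The parameter $\alpha>2$ satisfies $\xi\eta(1-\eta)\le\alpha<\xi(1-\eta)$. Algorithm: pull each arm once, then at timestep $t$ pull $\arg\min_i\{\hat\rho_{i,T_i(t-1)}-b_{t,T_i(t-1)}\}$ with $b_{t,s}=\theta^{1/\xi}t^{\alpha/\xi}/s^{1-\eta}$, where $T_i(n)$ is the number of pulls of arm $i$ during timesteps $1,\dots,n$. $\bar\rho_n=\frac1n\sum_iT_i(n)\hat\rho_{i,T_i(n)}$. $A(t)=\big\lceil\big(\frac{2}{\Delta_{\min}}\theta^{1/\xi}t^{\alpha/\xi}\big)^{1/(1-\eta)}\big\rceil$ and $N_p=\min\{t\in\mathbb{N}:t\ge A(t)\}$. *)

theory Defs
  imports "HOL-Probability.Probability"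
begin

text \<open>Arms are indexed 0,...,K-1; c i t w is the cost observed at the t-th pull
 (t >= 1) of arm i in outcome w.  The policy I t w is the arm pulled at timestep t.\<close>

definition rho_hat :: "real \<Rightarrow> (nat \<Rightarrow> nat \<Rightarrow> 'a \<Rightarrow> real) \<Rightarrow> nat \<Rightarrow> nat \<Rightarrow> 'a \<Rightarrow> real" where
  "rho_hat \<beta> c i n w = (1 / \<beta>) * ln ((1 / real n) * (\<Sum>t=1..n. exp (\<beta> * c i t w)))"

definition bonus :: "real \<Rightarrow> real \<Rightarrow> real \<Rightarrow> real \<Rightarrow> nat \<Rightarrow> nat \<Rightarrow> real" where
  "bonus \<theta> \<xi> \<alpha> \<eta> t s = \<theta> powr (1 / \<xi>) * real t powr (\<alpha> / \<xi>) / real s powr (1 - \<eta>)"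

definition pull_count :: "(nat \<Rightarrow> 'a \<Rightarrow> nat) \<Rightarrow> nat \<Rightarrow> nat \<Rightarrow> 'a \<Rightarrow> nat" where
  "pull_count I i n w = card {t \<in> {1..n}. I t w = i}"

definition rho_bar :: "real \<Rightarrow> (nat \<Rightarrow> nat \<Rightarrow> 'a \<Rightarrow> real) \<Rightarrow> nat \<Rightarrow> (nat \<Rightarrow> 'a \<Rightarrow> nat) \<Rightarrow> nat \<Rightarrow> 'a \<Rightarrow> real" where
  "rho_bar \<beta> c K I n w =
     (1 / real n) * (\<Sum>i<K. real (pull_count I i n w) * rho_hat \<beta> c i (pull_count I i n w) w)"

definition A_fun :: "real \<Rightarrow> real \<Rightarrow> real \<Rightarrow> real \<Rightarrow> real \<Rightarrow> nat \<Rightarrow> nat" where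
  "A_fun \<Delta> \<theta> \<xi> \<alpha> \<eta> t =
     nat \<lceil>((2 / \<Delta>) * \<theta> powr (1 / \<xi>) * real t powr (\<alpha> / \<xi>)) powr (1 / (1 - \<eta>))\<rceil>"

definition N_p :: "real \<Rightarrow> real \<Rightarrow> real \<Rightarrow> real \<Rightarrow> real \<Rightarrow> nat" where
  "N_p \<Delta> \<theta> \<xi> \<alpha> \<eta> = (LEAST t. 1 \<le> t \<and> A_fun \<Delta> \<theta> \<xi> \<alpha> \<eta> t \<le> t)"

end

theory Submission
  imports Defs
begin


lemma powr_step:
  fixes y \<alpha> :: real
  assumes "y > 1" "\<alpha> > 1"
  shows "y powr (-\<alpha>) \<le> ((y-1) powr (1-\<alpha>) - y powr (1-\<alpha>)) / (\<alpha> - 1)"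
proof -
  have "\<exists>z. y-1 < z \<and> z < y \<and> (y powr (1-\<alpha>) - (y-1) powr (1-\<alpha>) = (y - (y-1)) * ((1-\<alpha>) * z powr (1-\<alpha>-1)))"
  proof (rule MVT2)
    fix x assume "y - 1 \<le> x" "x \<le> y"
    then have "x > 0" using assms by auto
    then show "((\<lambda>z. z powr (1-\<alpha>)) has_real_derivative (1-\<alpha>) * x powr (1-\<alpha>-1)) (at x)"
      by (rule has_real_derivative_powr)
  qed simp
  then obtain z where z: "y-1 < z" "z < y" "y powr (1-\<alpha>) - (y-1) powr (1-\<alpha>) = (1-\<alpha>) * z powr (-\<alpha>)"
    by auto
  have "y powr (-\<alpha>) \<le> z powr (-\<alpha>)"
    using z assms by (intro powr_mono2') auto
  then have "(\<alpha>-1) * y powr (-\<alpha>) \<le> (\<alpha>-1) * z powr (-\<alpha>)"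
    using assms by simp
  also have "\<dots> = (y-1) powr (1-\<alpha>) - y powr (1-\<alpha>)" using z(3) by (simp add: algebra_simps)
  finally show ?thesis using assms by (simp add: field_simps)
qed

lemma powr_sum_bound:
  fixes c \<alpha> :: real
  assumes "c > 1" "\<alpha> > 1"
  shows "(\<Sum>j<N. (real j + c) powr (-\<alpha>)) \<le> (c-1) powr (1-\<alpha>) / (\<alpha> - 1)"
proof -
  have "(\<Sum>j<N. (real j + c) powr (-\<alpha>)) \<le> ((c-1) powr (1-\<alpha>) - (real N + c - 1) powr (1-\<alpha>)) / (\<alpha> - 1)"
  proof (induction N)
    case 0 then show ?case by simp
  next
    case (Suc N)
    have "(real N + c) powr (-\<alpha>) \<le> ((real N + c - 1) powr (1-\<alpha>) - (real N + c) powr (1-\<alpha>)) / (\<alpha> - 1)"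
      using powr_step[of "real N + c" \<alpha>] assms by simp
    with Suc show ?case by (simp add: diff_divide_distrib algebra_simps)
  qed
  also have "\<dots> \<le> (c-1) powr (1-\<alpha>) / (\<alpha> - 1)"
    using assms by (intro divide_right_mono) auto
  finally show ?thesis .
qed

lemma theta_z:
  fixes \<theta> y \<xi> \<alpha> :: real
  assumes "\<theta> > 0" "y > 0" "\<xi> > 0"
  shows "\<theta> / (\<theta> powr (1/\<xi>) * y powr (\<alpha>/\<xi>)) powr \<xi> = y powr (-\<alpha>)"
proof -
  have "(\<theta> powr (1/\<xi>) * y powr (\<alpha>/\<xi>)) powr \<xi> = \<theta> * y powr \<alpha>"
    using assms by (simp add: powr_mult powr_powr)
  then show ?thesis using assms by (simp add: powr_minus divide_simps)
qed

lemma z_ge1: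
  fixes \<theta> y \<xi> \<alpha> :: real
  assumes "\<theta> > 1" "y \<ge> 1" "\<xi> > 0" "\<alpha> \<ge> 0"
  shows "1 \<le> \<theta> powr (1/\<xi>) * y powr (\<alpha>/\<xi>)"
proof -
  have "1 \<le> \<theta> powr (1/\<xi>)" using assms by (intro ge_one_powr_ge_zero) auto
  moreover have "1 \<le> y powr (\<alpha>/\<xi>)" using assms by (intro ge_one_powr_ge_zero) auto
  ultimately show ?thesis by (metis mult_mono' mult_1 zero_le_one)
qed



lemma ln_ge_1_minus_inv: "x > 0 \<Longrightarrow> 1 - 1/x \<le> ln (x::real)"
proof -
  assume x: "x > 0"
  have "ln (1/x) \<le> 1/x - 1" using x by (intro ln_le_minus_one) auto
  then show ?thesis using x by (simp add: ln_div)
qed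

lemma lip_core:
  fixes p a m E :: real
  assumes p: "p > 0" and a: "a > 0" and m: "m > 0" and E1: "a / p \<le> E" and E2: "p / a \<le> E"
  shows "\<bar>m * (ln ((m*p + a)/(m+1)) - ln p)\<bar> \<le> E - 1"
proof -
  define p' where "p' = (m*p + a)/(m+1)"
  have p': "p' > 0" using p a m by (simp add: p'_def add_pos_pos)
  have E: "E \<ge> 1"
  proof (cases "a \<ge> p")
    case True then have "a/p \<ge> 1" using p by simp
    then show ?thesis using E1 by simp
  next
    case False then have "p/a \<ge> 1" using a by simp
    then show ?thesis using E2 by simp
  qed
  have eq: "ln p' - ln p = ln (p'/p)" using p p' by (simp add: ln_div)
  have up1: "ln (p'/p) \<le> p'/p - 1" using p p' by (intro ln_le_minus_one) simp
  have mp: "(m+1)*p > 0" "m*p + a > 0" using p m a by (simp_all add: add_pos_pos)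
  have q1: "p'/p - 1 = (a - p)/((m+1)*p)"
  proof -
    have "p'/p = (m*p + a)/((m+1)*p)" by (simp add: p'_def)
    also have "\<dots> = 1 + (a - p)/((m+1)*p)" using mp p m by (simp add: divide_simps) (simp add: algebra_simps)
    finally show ?thesis by simp
  qed
  have lo1: "1 - 1/(p'/p) \<le> ln (p'/p)" using p p' by (intro ln_ge_1_minus_inv) simp
  have q2: "1 - 1/(p'/p) = (a - p)/(m*p + a)"
  proof -
    have "1/(p'/p) = ((m+1)*p)/(m*p + a)" by (simp add: p'_def)
    also have "\<dots> = 1 - (a - p)/(m*p + a)" using mp p m by (simp add: divide_simps) (simp add: algebra_simps)
    finally show ?thesis by simp
  qed
  have U: "m * (ln p' - ln p) \<le> E - 1"
  proof -
    have "m * (ln p' - ln p) \<le> m * ((a - p)/((m+1)*p))"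
      using eq up1 q1 m by (intro mult_left_mono) auto
    also have "\<dots> \<le> E - 1"
    proof (cases "a \<ge> p")
      case True
      have "m * ((a - p)/((m+1)*p)) = (m/(m+1)) * ((a-p)/p)" by (simp add: field_simps)
      also have "\<dots> \<le> 1 * ((a-p)/p)" using True p m by (intro mult_right_mono) auto
      also have "\<dots> = a/p - 1" using p by (simp add: field_simps)
      finally show ?thesis using E1 by simp
    next
      case False
      then have "m * ((a - p)/((m+1)*p)) \<le> 0" using p m
        by (intro mult_nonneg_nonpos) (auto intro!: divide_nonpos_pos)
      then show ?thesis using E by simp
    qed
    finally show ?thesis .
  qed
  have L: "-(E - 1) \<le> m * (ln p' - ln p)"
  proof -
    have "-(E-1) \<le> m * ((a - p)/(m*p + a))"
    proof (cases "a \<ge> p")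
      case True
      have "0 \<le> m * ((a - p)/(m*p + a))" using True m mp by (intro mult_nonneg_nonneg divide_nonneg_pos) auto
      then show ?thesis using E by linarith
    next
      case False
      have "-(E-1) \<le> 1/E - 1"
      proof -
        have "0 \<le> (E-1)*(E-1)" by simp
        then have "(2 - E) * E \<le> 1" by (simp add: algebra_simps)
        then have "2 - E \<le> 1/E" using E by (simp add: le_divide_eq)
        then show ?thesis by simp
      qed
      also have "1/E - 1 \<le> a/p - 1"
      proof -
        have pa: "p/a > 0" using a p by simp
        have "1/E \<le> 1/(p/a)" using E2 pa by (intro frac_le) auto
        then show ?thesis by simp
      qed
      also have "a/p - 1 = (a - p)/p" using p by (simp add: field_simps)
      also have "(a - p)/p \<le> m * ((a - p)/(m*p + a))"
      proof -
        have "(m*p + a) * (a - p) \<le> (m*p) * (a-p)" using False a by (intro mult_right_mono_neg) auto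
        then show ?thesis using p m a mp by (simp add: field_simps)
      qed
      finally show ?thesis .
    qed
    also have "\<dots> \<le> m * (ln p' - ln p)" using eq lo1 q2 m by (intro mult_left_mono) auto
    finally show ?thesis .
  qed
  show ?thesis using U L by (simp add: p'_def abs_le_iff)
qed



lemma avg_bounds:
  fixes f :: "nat \<Rightarrow> real"
  assumes "m \<ge> 1" "\<And>t. lo \<le> f t" "\<And>t. f t \<le> hi"
  shows "lo \<le> (1 / real m) * (\<Sum>t=1..m. f t)" "(1 / real m) * (\<Sum>t=1..m. f t) \<le> hi"
proof -
  have "real m * lo \<le> (\<Sum>t=1..m. f t)"
    using sum_bounded_below[of "{1..m}" lo f] assms by auto
  then show "lo \<le> (1 / real m) * (\<Sum>t=1..m. f t)" using assms(1) by (simp add: field_simps)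
  have "(\<Sum>t=1..m. f t) \<le> real m * hi"
    using sum_bounded_above[of "{1..m}" f hi] assms by auto
  then show "(1 / real m) * (\<Sum>t=1..m. f t) \<le> hi" using assms(1) by (simp add: field_simps)
qed

lemma avg_exp_bounds:
  fixes c :: "nat \<Rightarrow> nat \<Rightarrow> 'a \<Rightarrow> real"
  assumes "m \<ge> 1" "\<And>t. \<bar>c i t w\<bar> \<le> R" "\<beta> > 0"
  shows "exp (-\<beta>*R) \<le> (1 / real m) * (\<Sum>t=1..m. exp (\<beta> * c i t w))"
        "(1 / real m) * (\<Sum>t=1..m. exp (\<beta> * c i t w)) \<le> exp (\<beta>*R)"
proof -
  have lo: "exp (-\<beta>*R) \<le> exp (\<beta> * c i t w)" for t
  proof -
    have "\<beta> * (-R) \<le> \<beta> * c i t w" using assms(2)[of t] assms(3) by (intro mult_left_mono) auto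
    then show ?thesis by simp
  qed
  have hi: "exp (\<beta> * c i t w) \<le> exp (\<beta>*R)" for t
  proof -
    have "\<beta> * c i t w \<le> \<beta> * R" using assms(2)[of t] assms(3) by (intro mult_left_mono) auto
    then show ?thesis by simp
  qed
  show "exp (-\<beta>*R) \<le> (1 / real m) * (\<Sum>t=1..m. exp (\<beta> * c i t w))"
    by (rule avg_bounds(1)[OF assms(1) lo hi])
  show "(1 / real m) * (\<Sum>t=1..m. exp (\<beta> * c i t w)) \<le> exp (\<beta>*R)"
    by (rule avg_bounds(2)[OF assms(1) lo hi])
qed

lemma rho_hat_bound:
  fixes c :: "nat \<Rightarrow> nat \<Rightarrow> 'a \<Rightarrow> real"
  assumes "m \<ge> 1" "\<And>t. \<bar>c i t w\<bar> \<le> R" "\<beta> > 0"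
  shows "\<bar>rho_hat \<beta> c i m w\<bar> \<le> R"
proof -
  define P where "P = (1 / real m) * (\<Sum>t=1..m. exp (\<beta> * c i t w))"
  have b: "exp (-\<beta>*R) \<le> P" "P \<le> exp (\<beta>*R)" using avg_exp_bounds[where c=c and i=i and w=w, OF assms] by (auto simp: P_def)
  have P0: "P > 0" using b(1) by (meson exp_gt_zero less_le_trans)
  have "ln P \<le> \<beta>*R" using b(2) P0 by (metis ln_exp ln_le_cancel_iff exp_gt_zero)
  moreover have "-\<beta>*R \<le> ln P" using b(1) P0 by (metis ln_exp ln_le_cancel_iff exp_gt_zero)
  ultimately have "\<bar>ln P\<bar> \<le> \<beta> * R" by auto
  then have "\<bar>(1/\<beta>) * ln P\<bar> \<le> R" using assms(3) by (simp add: abs_mult field_simps)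
  then show ?thesis by (simp add: rho_hat_def P_def)
qed

lemma S_step:
  fixes c :: "nat \<Rightarrow> nat \<Rightarrow> 'a \<Rightarrow> real"
  assumes cb: "\<And>t. \<bar>c i t w\<bar> \<le> R" and \<beta>: "\<beta> > 0"
  shows "\<bar>real (Suc m) * rho_hat \<beta> c i (Suc m) w - real m * rho_hat \<beta> c i m w\<bar>
           \<le> R + (exp (2*\<beta>*R) - 1) / \<beta>"
proof -
  have R0: "R \<ge> 0" using cb[of 0] by simp
  have E1: "exp (2*\<beta>*R) \<ge> 1" using R0 \<beta> by simp
  have ext: "0 \<le> (exp (2*\<beta>*R) - 1) / \<beta>" using E1 \<beta> by simp
  show ?thesis
  proof (cases "m = 0")
    case True
    have "rho_hat \<beta> c i 1 w = c i 1 w" using \<beta> by (simp add: rho_hat_def)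
    then show ?thesis using True cb[of 1] ext by simp
  next
    case False
    then have m1: "m \<ge> 1" by simp
    define p where "p = (1 / real m) * (\<Sum>t=1..m. exp (\<beta> * c i t w))"
    define a where "a = exp (\<beta> * c i (Suc m) w)"
    define p' where "p' = (1 / real (Suc m)) * (\<Sum>t=1..Suc m. exp (\<beta> * c i t w))"
    have bp: "exp (-\<beta>*R) \<le> p" "p \<le> exp (\<beta>*R)" using avg_exp_bounds[where c=c and i=i and w=w, OF m1 cb \<beta>] by (auto simp: p_def)
    have p0: "p > 0" using bp(1) by (meson exp_gt_zero less_le_trans)
    have a0: "a > 0" by (simp add: a_def)
    have ba: "exp (-\<beta>*R) \<le> a" "a \<le> exp (\<beta>*R)"
    proof -
      have "\<beta> * (-R) \<le> \<beta> * c i (Suc m) w" "\<beta> * c i (Suc m) w \<le> \<beta> * R"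
        using cb[of "Suc m"] \<beta> by (intro mult_left_mono; simp add: abs_le_iff)+
      then show "exp (-\<beta>*R) \<le> a" "a \<le> exp (\<beta>*R)" by (simp_all add: a_def)
    qed
    have sumeq: "(\<Sum>t=1..m. exp (\<beta> * c i t w)) = real m * p" using m1 by (simp add: p_def)
    have pp': "p' = (real m * p + a) / (real m + 1)"
      by (simp add: p'_def sumeq[symmetric] a_def add.commute)
    have Eeq: "exp (2*\<beta>*R) = exp (\<beta>*R) / exp (-\<beta>*R)"
    proof -
      have "exp (2*\<beta>*R) = exp (\<beta>*R - (-\<beta>*R))" by simp
      then show ?thesis by (simp only: exp_diff)
    qed
    have ap: "a / p \<le> exp (2*\<beta>*R)" unfolding Eeq
      using ba bp p0 a0 by (intro frac_le) auto
    have pa: "p / a \<le> exp (2*\<beta>*R)" unfolding Eeq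
      using ba bp p0 a0 by (intro frac_le) auto
    have core: "\<bar>real m * (ln p' - ln p)\<bar> \<le> exp (2*\<beta>*R) - 1"
      unfolding pp' using lip_core[OF p0 a0 _ ap pa, of "real m"] m1 by simp
    have lnp': "\<bar>ln p'\<bar> \<le> \<beta> * R"
    proof -
      have "\<bar>rho_hat \<beta> c i (Suc m) w\<bar> \<le> R" using rho_hat_bound[where c=c and i=i and w=w, OF _ cb \<beta>] by simp
      then have "\<bar>(1/\<beta>) * ln p'\<bar> \<le> R" by (simp add: rho_hat_def p'_def)
      then show ?thesis using \<beta> by (simp add: abs_mult field_simps)
    qed
    have "real (Suc m) * rho_hat \<beta> c i (Suc m) w - real m * rho_hat \<beta> c i m w
        = (1/\<beta>) * (ln p' + real m * (ln p' - ln p))"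
    proof -
      have r1: "rho_hat \<beta> c i (Suc m) w = (1/\<beta>) * ln p'" by (simp add: rho_hat_def p'_def)
      have r2: "rho_hat \<beta> c i m w = (1/\<beta>) * ln p" by (simp add: rho_hat_def p_def)
      show ?thesis unfolding r1 r2 by (simp add: algebra_simps add_divide_distrib)
    qed
    also have "\<bar>\<dots>\<bar> \<le> (1/\<beta>) * (\<beta> * R + (exp (2*\<beta>*R) - 1))"
    proof -
      have "\<bar>ln p' + real m * (ln p' - ln p)\<bar> \<le> \<beta> * R + (exp (2*\<beta>*R) - 1)"
        using abs_triangle_ineq[of "ln p'" "real m * (ln p' - ln p)"] lnp' core by linarith
      then show ?thesis using \<beta> by (simp add: abs_mult divide_right_mono)
    qed
    also have "\<dots> = R + (exp (2*\<beta>*R) - 1) / \<beta>" using \<beta> by (simp add: field_simps)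
    finally show ?thesis .
  qed
qed

lemma S_lip:
  fixes c :: "nat \<Rightarrow> nat \<Rightarrow> 'a \<Rightarrow> real"
  assumes cb: "\<And>t. \<bar>c i t w\<bar> \<le> R" and \<beta>: "\<beta> > 0" and mn: "m \<le> n"
  shows "\<bar>real n * rho_hat \<beta> c i n w - real m * rho_hat \<beta> c i m w\<bar>
           \<le> real (n - m) * (R + (exp (2*\<beta>*R) - 1) / \<beta>)"
  using mn
proof (induction n rule: dec_induct)
  case base then show ?case by simp
next
  case (step k)
  have "\<bar>real (Suc k) * rho_hat \<beta> c i (Suc k) w - real m * rho_hat \<beta> c i m w\<bar>
      \<le> \<bar>real (Suc k) * rho_hat \<beta> c i (Suc k) w - real k * rho_hat \<beta> c i k w\<bar>
        + \<bar>real k * rho_hat \<beta> c i k w - real m * rho_hat \<beta> c i m w\<bar>" by linarith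
  also have "\<dots> \<le> (R + (exp (2*\<beta>*R) - 1) / \<beta>) + real (k - m) * (R + (exp (2*\<beta>*R) - 1) / \<beta>)"
    using S_step[where c=c and i=i and w=w, OF cb \<beta>, of k] step.IH by linarith
  also have "\<dots> = real (Suc k - m) * (R + (exp (2*\<beta>*R) - 1) / \<beta>)"
    using step.hyps by (simp only: Suc_diff_le of_nat_Suc) (simp add: distrib_right)
  finally show ?case .
qed



lemma pc_0[simp]: "pull_count I i 0 w = 0"
  by (simp add: pull_count_def)

lemma pc_Suc: "pull_count I i (Suc n) w = pull_count I i n w + (if I (Suc n) w = i then 1 else 0)"
proof -
  have "{t \<in> {1..Suc n}. I t w = i} = {t \<in> {1..n}. I t w = i} \<union> (if I (Suc n) w = i then {Suc n} else {})"
    by (auto simp: le_Suc_eq)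
  then show ?thesis by (simp add: pull_count_def)
qed

lemma pc_le: "pull_count I i n w \<le> n"
  by (induction n) (auto simp: pc_Suc)

lemma pc_mono: "m \<le> n \<Longrightarrow> pull_count I i m w \<le> pull_count I i n w"
  by (induction n rule: dec_induct) (auto simp: pc_Suc intro: le_trans)

lemma pc_sum: "(\<And>t. I t w < K) \<Longrightarrow> (\<Sum>i<K. pull_count I i n w) = n"
proof (induction n)
  case 0 then show ?case by simp
next
  case (Suc n)
  have "(\<Sum>i<K. pull_count I i (Suc n) w) = (\<Sum>i<K. pull_count I i n w) + (\<Sum>i<K. (if I (Suc n) w = i then 1 else 0))"
    by (simp add: pc_Suc sum.distrib)
  also have "(\<Sum>i<K. (if I (Suc n) w = i then 1 else 0::nat)) = 1"
    using Suc.prems[of "Suc n"] by (simp add: sum.delta')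
  finally show ?case using Suc by simp
qed

lemma pc_two: "i \<noteq> j \<Longrightarrow> pull_count I i n w + pull_count I j n w \<le> n"
  by (induction n) (auto simp: pc_Suc)

lemma pc_last: "pull_count I i n w \<ge> 1 \<Longrightarrow>
   \<exists>t. 1 \<le> t \<and> t \<le> n \<and> I t w = i \<and> pull_count I i (t-1) w + 1 = pull_count I i n w"
proof (induction n)
  case 0 then show ?case by simp
next
  case (Suc n)
  show ?case
  proof (cases "I (Suc n) w = i")
    case True then show ?thesis by (intro exI[of _ "Suc n"]) (simp add: pc_Suc)
  next
    case False
    then have "pull_count I i (Suc n) w = pull_count I i n w" by (simp add: pc_Suc)
    then show ?thesis using Suc by (metis le_SucI)
  qed
qed



lemma Np_ge1:
  fixes \<Delta> \<theta> \<xi> \<alpha> \<eta> :: real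
  assumes "\<Delta> > 0" "\<theta> > 0" "\<xi> > 0" "\<alpha> \<ge> 0" "\<eta> < 1" "\<alpha> < \<xi> * (1 - \<eta>)"
  shows "1 \<le> N_p \<Delta> \<theta> \<xi> \<alpha> \<eta>"
proof -
  define X0 where "X0 = (2/\<Delta>) * \<theta> powr (1/\<xi>)"
  define p where "p = 1 / (1 - \<eta>)"
  define \<gamma> where "\<gamma> = \<alpha> / \<xi> * p"
  define c where "c = X0 powr p"
  have X0: "X0 > 0" using assms by (simp add: X0_def)
  have p: "p > 0" using assms by (simp add: p_def)
  have c: "c > 0" using X0 by (simp add: c_def)
  have \<gamma>0: "\<gamma> \<ge> 0" using assms p by (simp add: \<gamma>_def)
  have \<gamma>1: "\<gamma> < 1"
  proof -
    have "\<alpha> / \<xi> < 1 - \<eta>" using assms by (simp add: divide_less_eq mult.commute)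
    then show ?thesis using assms by (simp add: \<gamma>_def p_def divide_less_eq)
  qed
  define t where "t = nat \<lceil>c powr (1/(1-\<gamma>))\<rceil> + 1"
  have t1: "1 \<le> t" by (simp add: t_def)
  have tge: "c powr (1/(1-\<gamma>)) \<le> real t" unfolding t_def by linarith
  have tpos: "real t > 0" using t1 by simp
  have "c = (c powr (1/(1-\<gamma>))) powr (1-\<gamma>)" using c \<gamma>1 by (simp add: powr_powr)
  also have "\<dots> \<le> real t powr (1-\<gamma>)" using tge \<gamma>1 c by (intro powr_mono2) auto
  finally have ct: "c \<le> real t powr (1-\<gamma>)" .
  have "(X0 * real t powr (\<alpha>/\<xi>)) powr p = c * real t powr \<gamma>"
    using X0 tpos by (simp add: powr_mult powr_powr c_def \<gamma>_def)
  also have "\<dots> \<le> real t powr (1-\<gamma>) * real t powr \<gamma>"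
    using ct by (intro mult_right_mono) auto
  also have "\<dots> = real t" using tpos by (simp add: powr_add[symmetric])
  finally have "(X0 * real t powr (\<alpha>/\<xi>)) powr p \<le> real t" .
  then have "A_fun \<Delta> \<theta> \<xi> \<alpha> \<eta> t \<le> t"
    by (simp add: A_fun_def X0_def p_def nat_ceiling_le_eq)
  then have ex: "1 \<le> t \<and> A_fun \<Delta> \<theta> \<xi> \<alpha> \<eta> t \<le> t" using t1 by simp
  show ?thesis unfolding N_p_def using LeastI[of "\<lambda>t. 1 \<le> t \<and> A_fun \<Delta> \<theta> \<xi> \<alpha> \<eta> t \<le> t", OF ex] by simp
qed



lemma s_times_bonus:
  fixes s :: nat and X \<eta> :: real
  assumes "s \<ge> 1"
  shows "real s * (X / real s powr (1-\<eta>)) = real s powr \<eta> * X"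
proof -
  have sp: "real s > 0" using assms by simp
  have "real s = real s powr \<eta> * real s powr (1-\<eta>)" using sp by (simp add: powr_add[symmetric])
  then have "real s * (X / real s powr (1-\<eta>)) = real s powr \<eta> * real s powr (1-\<eta>) * (X / real s powr (1-\<eta>))"
    by simp
  also have "\<dots> = real s powr \<eta> * X" using sp by simp
  finally show ?thesis .
qed

lemma cover_arm:
  fixes M :: "'a measure"
    and c :: "nat \<Rightarrow> nat \<Rightarrow> 'a \<Rightarrow> real"
    and I :: "nat \<Rightarrow> 'a \<Rightarrow> nat"
    and K :: nat and \<beta> \<theta> \<xi> \<eta> \<alpha> \<Delta> x a :: real
    and \<mu> :: "nat \<Rightarrow> real" and istar i :: nat and n :: nat and w :: 'a
  assumes w: "w \<in> space M"
    and i: "i < K" "i \<noteq> istar" and istar: "istar < K"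
    and \<Delta>: "\<Delta> > 0" "\<Delta> \<le> \<mu> i - \<mu> istar"
    and \<theta>: "\<theta> > 1" and \<xi>: "\<xi> > 0" and \<alpha>: "\<alpha> \<ge> 0" and \<eta>: "\<eta> < 1"
    and I_init: "\<And>i w. w \<in> space M \<Longrightarrow> i < K \<Longrightarrow> pull_count I i K w = 1"
    and I_argmin: "\<And>t w j. w \<in> space M \<Longrightarrow> K < t \<Longrightarrow> j < K \<Longrightarrow>
        rho_hat \<beta> c (I t w) (pull_count I (I t w) (t - 1) w) w
          - bonus \<theta> \<xi> \<alpha> \<eta> t (pull_count I (I t w) (t - 1) w)
        \<le> rho_hat \<beta> c j (pull_count I j (t - 1) w) w - bonus \<theta> \<xi> \<alpha> \<eta> t (pull_count I j (t - 1) w)"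
    and x: "1 \<le> x"
    and a: "a = (3 + real (A_fun \<Delta> \<theta> \<xi> \<alpha> \<eta> n)) * x"
    and big: "real (pull_count I i n w) > a"
  shows "(\<exists>j<n+1. real (nat \<lfloor>a\<rfloor> + j) * rho_hat \<beta> c i (nat \<lfloor>a\<rfloor> + j) w - real (nat \<lfloor>a\<rfloor> + j) * \<mu> i
            \<le> - (real (nat \<lfloor>a\<rfloor> + j) powr \<eta> * (\<theta> powr (1/\<xi>) * (real (nat \<lfloor>a\<rfloor> + j) + 2) powr (\<alpha>/\<xi>))))
       \<or> (\<exists>j<n. real (j+1) * rho_hat \<beta> c istar (j+1) w - real (j+1) * \<mu> istar
            \<ge> real (j+1) powr \<eta> * (\<theta> powr (1/\<xi>) * (real (j+1) + a) powr (\<alpha>/\<xi>)))"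
proof -
  define An where "An = A_fun \<Delta> \<theta> \<xi> \<alpha> \<eta> n"
  define m where "m = pull_count I i n w"
  define s0 where "s0 = nat \<lfloor>a\<rfloor>"
  have aAn: "a \<ge> 3 + real An" using x a proof -
    have "(3 + real An) * 1 \<le> (3 + real An) * x" using x by (intro mult_left_mono) auto
    then show ?thesis using a by (simp add: An_def)
  qed
  have m3: "real m > 3 + real An" using big aAn by (simp add: m_def)
  then have m1: "m \<ge> 1" by simp
  obtain t where t: "1 \<le> t" "t \<le> n" "I t w = i" "pull_count I i (t-1) w + 1 = m"
    using pc_last[of I i n w] m1 by (auto simp: m_def)
  define s where "s = pull_count I i (t-1) w"
  define ss where "ss = pull_count I istar (t-1) w"
  have tK: "K < t"
  proof (rule ccontr)
    assume "\<not> K < t"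
    then have "pull_count I i t w \<le> pull_count I i K w" by (intro pc_mono) simp
    also have "\<dots> = 1" using I_init[OF w i(1)] .
    finally have "pull_count I i t w \<le> 1" .
    moreover have "pull_count I i t w = m" using t pc_Suc[of I i "t-1" w] by simp
    ultimately show False using m3 by simp
  qed
  have ss1: "ss \<ge> 1"
  proof -
    have "pull_count I istar K w \<le> pull_count I istar (t-1) w" using tK by (intro pc_mono) simp
    then show ?thesis using I_init[OF w istar] by (simp add: ss_def)
  qed
  have sss: "s + ss \<le> t - 1" using pc_two[OF i(2)] by (simp add: s_def ss_def)
  have sm: "s + 1 = m" using t by (simp add: s_def)
  have n1: "n \<ge> 1" using t by simp
  define Y where "Y = (2/\<Delta>) * \<theta> powr (1/\<xi>) * real n powr (\<alpha>/\<xi>)"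
  have Y: "Y > 0" using \<Delta> \<theta> n1 by (simp add: Y_def)
  have sAn: "real s \<ge> real An" using m3 sm by linarith
  have An_ge: "real An \<ge> Y powr (1/(1-\<eta>))" by (simp add: An_def A_fun_def Y_def)
  have "Y = (Y powr (1/(1-\<eta>))) powr (1-\<eta>)" using Y \<eta> by (simp add: powr_powr)
  also have "\<dots> \<le> real s powr (1-\<eta>)" using sAn An_ge \<eta> by (intro powr_mono2) auto
  finally have sY: "Y \<le> real s powr (1-\<eta>)" .
  have bts: "bonus \<theta> \<xi> \<alpha> \<eta> t s \<le> \<Delta>/2"
  proof -
    have "bonus \<theta> \<xi> \<alpha> \<eta> t s = \<theta> powr (1/\<xi>) * real t powr (\<alpha>/\<xi>) / real s powr (1-\<eta>)"
      by (simp add: bonus_def)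
    also have "\<dots> \<le> \<theta> powr (1/\<xi>) * real n powr (\<alpha>/\<xi>) / Y"
      using Y sY t \<alpha> \<xi> by (intro frac_le mult_left_mono powr_mono2) auto
    also have "\<dots> = \<Delta>/2" using \<Delta> \<theta> n1 by (simp add: Y_def)
    finally show ?thesis .
  qed
  have amin: "rho_hat \<beta> c i s w - bonus \<theta> \<xi> \<alpha> \<eta> t s \<le> rho_hat \<beta> c istar ss w - bonus \<theta> \<xi> \<alpha> \<eta> t ss"
    using I_argmin[OF w tK istar] t(3) by (simp add: s_def ss_def)
  have s1: "s \<ge> 1" using m3 sm by linarith
  show ?thesis
  proof (cases "rho_hat \<beta> c i s w - \<mu> i < - bonus \<theta> \<xi> \<alpha> \<eta> t s")
    case True
    have ss0: "s0 \<le> s"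
    proof -
      have "real_of_int \<lfloor>a\<rfloor> < real s + 1" using big sm m_def by linarith
      then have "\<lfloor>a\<rfloor> \<le> int s" by linarith
      then show ?thesis by (simp add: s0_def)
    qed
    have sn: "s \<le> n" using sm pc_le[of I i n w] m_def by simp
    have "real s * rho_hat \<beta> c i s w - real s * \<mu> i < real s * (- bonus \<theta> \<xi> \<alpha> \<eta> t s)"
    proof -
      have "real s * (rho_hat \<beta> c i s w - \<mu> i) < real s * (- bonus \<theta> \<xi> \<alpha> \<eta> t s)"
        using True s1 by (intro mult_strict_left_mono) auto
      then show ?thesis by (simp add: right_diff_distrib)
    qed
    also have "real s * (- bonus \<theta> \<xi> \<alpha> \<eta> t s) = - (real s powr \<eta> * (\<theta> powr (1/\<xi>) * real t powr (\<alpha>/\<xi>)))"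
      using s_times_bonus[OF s1, of "\<theta> powr (1/\<xi>) * real t powr (\<alpha>/\<xi>)" \<eta>] by (simp add: bonus_def)
    also have "\<dots> \<le> - (real s powr \<eta> * (\<theta> powr (1/\<xi>) * (real s + 2) powr (\<alpha>/\<xi>)))"
    proof -
      have "real s + 2 \<le> real t" using sss ss1 tK by linarith
      then have "(real s + 2) powr (\<alpha>/\<xi>) \<le> real t powr (\<alpha>/\<xi>)" using \<alpha> \<xi> by (intro powr_mono2) auto
      then show ?thesis by (intro le_imp_neg_le mult_left_mono) auto
    qed
    finally have "real s * rho_hat \<beta> c i s w - real s * \<mu> i \<le> - (real s powr \<eta> * (\<theta> powr (1/\<xi>) * (real s + 2) powr (\<alpha>/\<xi>)))"
      by simp
    then have "real (s0 + (s - s0)) * rho_hat \<beta> c i (s0 + (s - s0)) w - real (s0 + (s - s0)) * \<mu> i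
            \<le> - (real (s0 + (s - s0)) powr \<eta> * (\<theta> powr (1/\<xi>) * (real (s0 + (s - s0)) + 2) powr (\<alpha>/\<xi>)))"
      using ss0 by simp
    moreover have "s - s0 < n + 1" using sn by simp
    ultimately show ?thesis unfolding s0_def by blast
  next
    case False
    have B: "rho_hat \<beta> c istar ss w - \<mu> istar \<ge> bonus \<theta> \<xi> \<alpha> \<eta> t ss"
    proof (rule ccontr)
      assume "\<not> ?thesis"
      then show False using False amin bts \<Delta> by linarith
    qed
    have "real ss * rho_hat \<beta> c istar ss w - real ss * \<mu> istar \<ge> real ss * bonus \<theta> \<xi> \<alpha> \<eta> t ss"
    proof -
      have "real ss * (rho_hat \<beta> c istar ss w - \<mu> istar) \<ge> real ss * bonus \<theta> \<xi> \<alpha> \<eta> t ss"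
        using B ss1 by (intro mult_left_mono) auto
      then show ?thesis by (simp add: right_diff_distrib)
    qed
    moreover have "real ss * bonus \<theta> \<xi> \<alpha> \<eta> t ss = real ss powr \<eta> * (\<theta> powr (1/\<xi>) * real t powr (\<alpha>/\<xi>))"
      using s_times_bonus[OF ss1, of "\<theta> powr (1/\<xi>) * real t powr (\<alpha>/\<xi>)" \<eta>] by (simp add: bonus_def)
    moreover have "real ss powr \<eta> * (\<theta> powr (1/\<xi>) * (real ss + a) powr (\<alpha>/\<xi>)) \<le> real ss powr \<eta> * (\<theta> powr (1/\<xi>) * real t powr (\<alpha>/\<xi>))"
    proof -
      have "real ss + a \<le> real t" using sss sm big m_def tK by linarith
      moreover have "real ss + a \<ge> 0" using aAn by simp
      ultimately have "(real ss + a) powr (\<alpha>/\<xi>) \<le> real t powr (\<alpha>/\<xi>)" using \<alpha> \<xi> by (intro powr_mono2) auto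
      then show ?thesis by (intro mult_left_mono) auto
    qed
    ultimately have "real ss * rho_hat \<beta> c istar ss w - real ss * \<mu> istar \<ge> real ss powr \<eta> * (\<theta> powr (1/\<xi>) * (real ss + a) powr (\<alpha>/\<xi>))"
      by linarith
    then have "real ((ss-1)+1) * rho_hat \<beta> c istar ((ss-1)+1) w - real ((ss-1)+1) * \<mu> istar \<ge> real ((ss-1)+1) powr \<eta> * (\<theta> powr (1/\<xi>) * (real ((ss-1)+1) + a) powr (\<alpha>/\<xi>))"
      using ss1 by simp
    moreover have "ss - 1 < n" using sss t by linarith
    ultimately show ?thesis by blast
  qed
qed


theorem lemma12:
  fixes M :: "'a measure"
    and c :: "nat \<Rightarrow> nat \<Rightarrow> 'a \<Rightarrow> real"
    and I :: "nat \<Rightarrow> 'a \<Rightarrow> nat"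
    and K :: nat and R \<beta> \<theta> \<xi> \<eta> \<alpha> :: real
    and \<mu> :: "nat \<Rightarrow> real" and istar :: nat
    and n :: nat and x :: real
  assumes prob: "prob_space M"
    and K2: "2 \<le> K"
    and c_meas: "\<And>i t. c i t \<in> borel_measurable M"
    and c_bound: "\<And>i t w. w \<in> space M \<Longrightarrow> \<bar>c i t w\<bar> \<le> R"
    and beta_pos: "0 < \<beta>"
    and mu_lim: "\<And>i. i < K \<Longrightarrow>
        (\<lambda>m. integral\<^sup>L M (rho_hat \<beta> c i m)) \<longlonglongrightarrow> \<mu> i"
    and conc_up: "\<And>i m z. i < K \<Longrightarrow> 1 \<le> m \<Longrightarrow> 1 \<le> z \<Longrightarrow>
        measure M {w \<in> space M. real m * rho_hat \<beta> c i m w - real m * \<mu> i \<ge> real m powr \<eta> * z}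
          \<le> \<theta> / z powr \<xi>"
    and conc_low: "\<And>i m z. i < K \<Longrightarrow> 1 \<le> m \<Longrightarrow> 1 \<le> z \<Longrightarrow>
        measure M {w \<in> space M. real m * rho_hat \<beta> c i m w - real m * \<mu> i \<le> - (real m powr \<eta> * z)}
          \<le> \<theta> / z powr \<xi>"
    and xi: "1 < \<xi>"
    and eta: "1/2 \<le> \<eta>" "\<eta> < 1"
    and istar: "istar < K" "\<And>i. i < K \<Longrightarrow> i \<noteq> istar \<Longrightarrow> \<mu> istar < \<mu> i"
    and theta: "1 < \<theta>"
      "2 * \<theta> powr (1 / \<xi>) / Min {\<mu> i - \<mu> istar | i. i < K \<and> i \<noteq> istar} > 1"
    and alpha: "2 < \<alpha>" "\<xi> * \<eta> * (1 - \<eta>) \<le> \<alpha>" "\<alpha> < \<xi> * (1 - \<eta>)"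
    and I_meas: "\<And>t. I t \<in> measurable M (count_space UNIV)"
    and I_range: "\<And>t w. w \<in> space M \<Longrightarrow> I t w < K"
    and I_init: "\<And>i w. w \<in> space M \<Longrightarrow> i < K \<Longrightarrow> pull_count I i K w = 1"
    and I_argmin: "\<And>t w j. w \<in> space M \<Longrightarrow> K < t \<Longrightarrow> j < K \<Longrightarrow>
        rho_hat \<beta> c (I t w) (pull_count I (I t w) (t - 1) w) w
          - bonus \<theta> \<xi> \<alpha> \<eta> t (pull_count I (I t w) (t - 1) w)
        \<le> rho_hat \<beta> c j (pull_count I j (t - 1) w) w - bonus \<theta> \<xi> \<alpha> \<eta> t (pull_count I j (t - 1) w)"
    and n: "N_p (Min {\<mu> i - \<mu> istar | i. i < K \<and> i \<noteq> istar}) \<theta> \<xi> \<alpha> \<eta> \<le> n"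
    and x: "1 \<le> x"
  shows
   "let \<Delta>min = Min {\<mu> i - \<mu> istar | i. i < K \<and> i \<noteq> istar};
        An = A_fun \<Delta>min \<theta> \<xi> \<alpha> \<eta> n;
        r0 = real n powr \<eta> + 2 * (R + (exp (2 * \<beta> * R) - 1) / (2 * \<beta>)) * (real K - 1) * (3 + real An);
        bound = \<theta> / x powr \<xi> + 2 * (real K - 1) / ((\<alpha> - 1) * ((1 + real An) * x) powr (\<alpha> - 1))
    in measure M {w \<in> space M. real n * rho_bar \<beta> c K I n w - real n * \<mu> istar \<ge> r0 * x} \<le> bound
     \<and> measure M {w \<in> space M. real n * rho_bar \<beta> c K I n w - real n * \<mu> istar \<le> - (r0 * x)} \<le> bound"
proof -
  interpret P: prob_space M by (rule prob)
  define S where "S = {..<K} - {istar}"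
  define \<Delta> where "\<Delta> = Min {\<mu> i - \<mu> istar | i. i < K \<and> i \<noteq> istar}"
  define An where "An = A_fun \<Delta> \<theta> \<xi> \<alpha> \<eta> n"
  define L where "L = R + (exp (2 * \<beta> * R) - 1) / \<beta>"
  define r0 where "r0 = real n powr \<eta> + 2 * (R + (exp (2 * \<beta> * R) - 1) / (2 * \<beta>)) * (real K - 1) * (3 + real An)"
  define bnd where "bnd = \<theta> / x powr \<xi> + 2 * (real K - 1) / ((\<alpha> - 1) * ((1 + real An) * x) powr (\<alpha> - 1))"
  define a where "a = (3 + real An) * x"
  define s0 where "s0 = nat \<lfloor>a\<rfloor>"
  have seteq: "{\<mu> i - \<mu> istar | i. i < K \<and> i \<noteq> istar} = (\<lambda>i. \<mu> i - \<mu> istar) ` S"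
    by (auto simp: S_def)
  have finS: "finite S" by (simp add: S_def)
  have cardS: "card S = K - 1" using istar(1) by (simp add: S_def)
  have Sne: "S \<noteq> {}"
  proof -
    have "card S \<ge> 1" using cardS K2 by simp
    then show ?thesis by auto
  qed
  have \<Delta>le: "\<Delta> \<le> \<mu> i - \<mu> istar" if "i \<in> S" for i
    unfolding \<Delta>_def seteq using finS that by (intro Min_le) auto
  have \<Delta>pos: "\<Delta> > 0"
  proof -
    have "\<Delta> \<in> (\<lambda>i. \<mu> i - \<mu> istar) ` S" unfolding \<Delta>_def seteq using finS Sne by (intro Min_in) auto
    then obtain i where "i \<in> S" "\<Delta> = \<mu> i - \<mu> istar" by auto
    then show ?thesis using istar(2)[of i] by (auto simp: S_def)
  qed
  have \<xi>0: "\<xi> > 0" using xi by simp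
  have \<alpha>1: "\<alpha> > 1" using alpha by simp
  have \<alpha>0: "\<alpha> \<ge> 0" using alpha by simp
  have n1: "n \<ge> 1"
    using Np_ge1[of \<Delta> \<theta> \<xi> \<alpha> \<eta>] \<Delta>pos theta(1) \<xi>0 alpha eta n by (simp add: \<Delta>_def)
  obtain w0 where w0: "w0 \<in> space M" using P.not_empty by auto
  have R0: "R \<ge> 0" using c_bound[OF w0, of 0 0] by simp
  have L0: "L \<ge> 0" using R0 beta_pos by (simp add: L_def)
  have aAn: "a \<ge> 3 + real An"
  proof -
    have "(3 + real An) * 1 \<le> (3 + real An) * x" using x by (intro mult_left_mono) auto
    then show ?thesis by (simp add: a_def)
  qed
  have a1: "a \<ge> (1 + real An) * x" using x by (simp add: a_def mult_right_mono)
  have a_pos: "a > 0" using aAn by simp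
  have s03: "s0 \<ge> 3" using aAn by (simp add: s0_def) linarith
  have s0a: "real s0 + 1 \<ge> a" using aAn by (simp add: s0_def)
  have rm[measurable]: "\<And>i m. rho_hat \<beta> c i m \<in> borel_measurable M"
    unfolding rho_hat_def using c_meas by measurable
  define zi where "zi = (\<lambda>j. \<theta> powr (1/\<xi>) * (real (s0 + j) + 2) powr (\<alpha>/\<xi>))"
  define zs where "zs = (\<lambda>j::nat. \<theta> powr (1/\<xi>) * (real (j+1) + a) powr (\<alpha>/\<xi>))"
  define Ei where "Ei = (\<lambda>i j. {w \<in> space M. real (s0 + j) * rho_hat \<beta> c i (s0 + j) w - real (s0 + j) * \<mu> i
            \<le> - (real (s0 + j) powr \<eta> * zi j)})"
  define Es where "Es = (\<lambda>j. {w \<in> space M. real (j+1) * rho_hat \<beta> c istar (j+1) w - real (j+1) * \<mu> istar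
            \<ge> real (j+1) powr \<eta> * zs j})"
  define F where "F = (\<lambda>i. (\<Union>j\<in>{..<n+1}. Ei i j) \<union> (\<Union>j\<in>{..<n}. Es j))"
  have Ei_sets: "Ei i j \<in> sets M" for i j unfolding Ei_def by measurable
  have Es_sets: "Es j \<in> sets M" for j unfolding Es_def by measurable
  have F_sets: "F i \<in> sets M" for i unfolding F_def using Ei_sets Es_sets by auto
  have Ei_meas: "measure M (Ei i j) \<le> (real j + (real s0 + 2)) powr (-\<alpha>)" if "i \<in> S" for i j
  proof -
    have "measure M (Ei i j) \<le> \<theta> / zi j powr \<xi>"
      unfolding Ei_def using that s03 by (intro conc_low) (auto simp: S_def zi_def intro!: z_ge1 theta(1) \<alpha>0 \<xi>0)
    also have "\<dots> = (real j + (real s0 + 2)) powr (-\<alpha>)"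
      unfolding zi_def using theta \<xi>0 by (subst theta_z) (auto simp: add_ac)
    finally show ?thesis .
  qed
  have Es_meas: "measure M (Es j) \<le> (real j + (a + 1)) powr (-\<alpha>)" for j
  proof -
    have "measure M (Es j) \<le> \<theta> / zs j powr \<xi>"
      unfolding Es_def using istar(1) a_pos by (intro conc_up) (auto simp: zs_def intro!: z_ge1 theta(1) \<alpha>0 \<xi>0)
    also have "\<dots> = (real j + (a + 1)) powr (-\<alpha>)"
      unfolding zs_def using theta \<xi>0 a_pos by (subst theta_z) (auto simp: add_ac)
    finally show ?thesis .
  qed
  have apow: "a powr (1-\<alpha>) \<le> 1 / ((1 + real An) * x) powr (\<alpha> - 1)"
  proof -
    have "a powr (1-\<alpha>) \<le> ((1 + real An) * x) powr (1-\<alpha>)"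
      using a1 x \<alpha>1 by (intro powr_mono2') auto
    also have "\<dots> = 1 / ((1 + real An) * x) powr (\<alpha> - 1)"
      by (simp add: powr_minus_divide[symmetric])
    finally show ?thesis .
  qed
  have F_meas: "measure M (F i) \<le> 2 / ((\<alpha> - 1) * ((1 + real An) * x) powr (\<alpha> - 1))" if "i \<in> S" for i
  proof -
    have "measure M (F i) \<le> measure M (\<Union>j\<in>{..<n+1}. Ei i j) + measure M (\<Union>j\<in>{..<n}. Es j)"
      unfolding F_def using Ei_sets Es_sets by (intro measure_Un_le) auto
    also have "\<dots> \<le> (\<Sum>j<n+1. measure M (Ei i j)) + (\<Sum>j<n. measure M (Es j))"
      using Ei_sets Es_sets by (intro add_mono measure_UNION_le) auto
    also have "\<dots> \<le> (\<Sum>j<n+1. (real j + (real s0 + 2)) powr (-\<alpha>)) + (\<Sum>j<n. (real j + (a + 1)) powr (-\<alpha>))"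
      using Ei_meas[OF that] Es_meas by (intro add_mono sum_mono) auto
    also have "\<dots> \<le> (real s0 + 1) powr (1-\<alpha>) / (\<alpha> - 1) + a powr (1-\<alpha>) / (\<alpha> - 1)"
      using powr_sum_bound[of "real s0 + 2" \<alpha> "n+1"] powr_sum_bound[of "a + 1" \<alpha> n] \<alpha>1 a_pos
      by (intro add_mono) (auto simp: add_ac)
    also have "\<dots> \<le> a powr (1-\<alpha>) / (\<alpha> - 1) + a powr (1-\<alpha>) / (\<alpha> - 1)"
      using s0a a_pos \<alpha>1 by (intro add_mono divide_right_mono powr_mono2') auto
    also have "\<dots> = 2 * a powr (1-\<alpha>) / (\<alpha> - 1)" by simp
    also have "\<dots> \<le> 2 * (1 / ((1 + real An) * x) powr (\<alpha> - 1)) / (\<alpha> - 1)"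
      using apow \<alpha>1 by (intro divide_right_mono mult_left_mono) auto
    also have "\<dots> = 2 / ((\<alpha> - 1) * ((1 + real An) * x) powr (\<alpha> - 1))" by simp
    finally show ?thesis .
  qed
  have cover: "w \<in> F i" if w: "w \<in> space M" and iS: "i \<in> S" and big: "real (pull_count I i n w) > a" for w i
  proof -
    have i: "i < K" "i \<noteq> istar" using iS by (auto simp: S_def)
    have aeq: "a = (3 + real (A_fun \<Delta> \<theta> \<xi> \<alpha> \<eta> n)) * x" by (simp add: a_def An_def)
    have "(\<exists>j<n+1. real (nat \<lfloor>a\<rfloor> + j) * rho_hat \<beta> c i (nat \<lfloor>a\<rfloor> + j) w - real (nat \<lfloor>a\<rfloor> + j) * \<mu> i
            \<le> - (real (nat \<lfloor>a\<rfloor> + j) powr \<eta> * (\<theta> powr (1/\<xi>) * (real (nat \<lfloor>a\<rfloor> + j) + 2) powr (\<alpha>/\<xi>))))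
       \<or> (\<exists>j<n. real (j+1) * rho_hat \<beta> c istar (j+1) w - real (j+1) * \<mu> istar
            \<ge> real (j+1) powr \<eta> * (\<theta> powr (1/\<xi>) * (real (j+1) + a) powr (\<alpha>/\<xi>)))"
      by (rule cover_arm[where M=M and K=K and \<Delta>=\<Delta> and x=x, OF w i istar(1) \<Delta>pos \<Delta>le[OF iS] theta(1) \<xi>0 \<alpha>0 eta(2)
            I_init I_argmin x aeq big])
    then show ?thesis unfolding F_def Ei_def Es_def zi_def zs_def s0_def using w by blast
  qed
  have decomp: "\<bar>real n * rho_bar \<beta> c K I n w - real n * \<mu> istar - (real n * rho_hat \<beta> c istar n w - real n * \<mu> istar)\<bar>
      \<le> (R + L) * ((real K - 1) * a)"
    if w: "w \<in> space M" and hyp: "\<forall>i\<in>S. real (pull_count I i n w) \<le> a" for w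
  proof -
    define T where "T = (\<lambda>i. pull_count I i n w)"
    define g where "g = (\<lambda>i. real (T i) * rho_hat \<beta> c i (T i) w)"
    have cb: "\<And>i t. \<bar>c i t w\<bar> \<le> R" using c_bound[OF w] .
    have nrb: "real n * rho_bar \<beta> c K I n w = (\<Sum>i<K. g i)"
      using n1 by (simp add: rho_bar_def g_def T_def)
    have spl: "(\<Sum>i<K. g i) = g istar + (\<Sum>i\<in>S. g i)"
      unfolding S_def using istar(1) by (subst sum.remove[of "{..<K}" istar]) auto
    have nsum0: "(\<Sum>i<K. T i) = n" unfolding T_def by (rule pc_sum) (rule I_range[OF w])
    have nsum: "real n = real (T istar) + (\<Sum>i\<in>S. real (T i))"
    proof -
      have "real n = (\<Sum>i<K. real (T i))" using nsum0 by (metis of_nat_sum)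
      also have "\<dots> = real (T istar) + (\<Sum>i\<in>S. real (T i))"
        unfolding S_def using istar(1) by (subst sum.remove[of "{..<K}" istar]) auto
      finally show ?thesis .
    qed
    have gb: "\<bar>g i\<bar> \<le> R * real (T i)" for i
    proof (cases "T i = 0")
      case True then show ?thesis by (simp add: g_def)
    next
      case False
      then have "\<bar>rho_hat \<beta> c i (T i) w\<bar> \<le> R" by (intro rho_hat_bound[where c=c and i=i and w=w] cb beta_pos) simp
      then have "real (T i) * \<bar>rho_hat \<beta> c i (T i) w\<bar> \<le> real (T i) * R" by (intro mult_left_mono) auto
      then show ?thesis by (simp add: g_def abs_mult mult.commute)
    qed
    have Tn: "T istar \<le> n" unfolding T_def by (rule pc_le)
    have lip: "\<bar>real n * rho_hat \<beta> c istar n w - g istar\<bar> \<le> real (n - T istar) * L"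
      unfolding g_def L_def by (rule S_lip[where c=c and i=istar and w=w, OF cb beta_pos Tn])
    have nT: "real (n - T istar) = (\<Sum>i\<in>S. real (T i))" using nsum Tn by simp
    have "real n * rho_bar \<beta> c K I n w - real n * \<mu> istar - (real n * rho_hat \<beta> c istar n w - real n * \<mu> istar)
        = (\<Sum>i\<in>S. g i) - (real n * rho_hat \<beta> c istar n w - g istar)"
      using nrb spl by simp
    also have "\<bar>\<dots>\<bar> \<le> (\<Sum>i\<in>S. \<bar>g i\<bar>) + \<bar>real n * rho_hat \<beta> c istar n w - g istar\<bar>"
      using sum_abs[of g S] by linarith
    also have "\<dots> \<le> (\<Sum>i\<in>S. R * real (T i)) + (\<Sum>i\<in>S. real (T i)) * L"
      using gb lip nT by (intro add_mono sum_mono) auto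
    also have "\<dots> = (R + L) * (\<Sum>i\<in>S. real (T i))"
      by (simp add: sum_distrib_left[symmetric] algebra_simps)
    also have "\<dots> \<le> (R + L) * (real (card S) * a)"
      using hyp R0 L0 by (intro mult_left_mono sum_bounded_above) (auto simp: T_def)
    also have "real (card S) = real K - 1" using cardS K2 by simp
    finally show ?thesis .
  qed
  have r0x: "r0 * x = real n powr \<eta> * x + (R + L) * ((real K - 1) * a)"
    using beta_pos by (simp add: r0_def L_def a_def field_simps)
  have key: "measure M E \<le> bnd" if E0: "E0 \<in> sets M" "measure M E0 \<le> \<theta> / x powr \<xi>"
     and sub: "E \<subseteq> E0 \<union> (\<Union>i\<in>S. F i)" for E E0
  proof -
    have "measure M E \<le> measure M (E0 \<union> (\<Union>i\<in>S. F i))"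
      using sub E0 F_sets finS by (intro P.finite_measure_mono) auto
    also have "\<dots> \<le> measure M E0 + measure M (\<Union>i\<in>S. F i)"
      using E0 F_sets finS by (intro measure_Un_le) auto
    also have "\<dots> \<le> \<theta> / x powr \<xi> + (\<Sum>i\<in>S. measure M (F i))"
      using E0 F_sets finS by (intro add_mono measure_UNION_le) auto
    also have "\<dots> \<le> \<theta> / x powr \<xi> + real (card S) * (2 / ((\<alpha> - 1) * ((1 + real An) * x) powr (\<alpha> - 1)))"
      using F_meas by (intro add_mono sum_bounded_above) auto
    also have "\<dots> = bnd" using cardS K2 by (simp add: bnd_def)
    finally show ?thesis .
  qed
  have up: "measure M {w \<in> space M. real n * rho_bar \<beta> c K I n w - real n * \<mu> istar \<ge> r0 * x} \<le> bnd"
  proof (rule key)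
    show "{w \<in> space M. real n * rho_hat \<beta> c istar n w - real n * \<mu> istar \<ge> real n powr \<eta> * x} \<in> sets M"
      by measurable
    show "measure M {w \<in> space M. real n * rho_hat \<beta> c istar n w - real n * \<mu> istar \<ge> real n powr \<eta> * x} \<le> \<theta> / x powr \<xi>"
      using n1 x istar(1) by (intro conc_up) auto
    show "{w \<in> space M. real n * rho_bar \<beta> c K I n w - real n * \<mu> istar \<ge> r0 * x}
       \<subseteq> {w \<in> space M. real n * rho_hat \<beta> c istar n w - real n * \<mu> istar \<ge> real n powr \<eta> * x} \<union> (\<Union>i\<in>S. F i)"
    proof (safe)
      fix w assume w: "w \<in> space M" and ge: "r0 * x \<le> real n * rho_bar \<beta> c K I n w - real n * \<mu> istar"
        and nF: "w \<notin> (\<Union>i\<in>S. F i)"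
      have "\<forall>i\<in>S. real (pull_count I i n w) \<le> a"
        using cover[OF w] nF by force
      from decomp[OF w this] ge r0x show "real n powr \<eta> * x \<le> real n * rho_hat \<beta> c istar n w - real n * \<mu> istar"
        by linarith
    qed
  qed
  have low: "measure M {w \<in> space M. real n * rho_bar \<beta> c K I n w - real n * \<mu> istar \<le> - (r0 * x)} \<le> bnd"
  proof (rule key)
    show "{w \<in> space M. real n * rho_hat \<beta> c istar n w - real n * \<mu> istar \<le> - (real n powr \<eta> * x)} \<in> sets M"
      by measurable
    show "measure M {w \<in> space M. real n * rho_hat \<beta> c istar n w - real n * \<mu> istar \<le> - (real n powr \<eta> * x)} \<le> \<theta> / x powr \<xi>"
      using n1 x istar(1) by (intro conc_low) auto
    show "{w \<in> space M. real n * rho_bar \<beta> c K I n w - real n * \<mu> istar \<le> - (r0 * x)}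
       \<subseteq> {w \<in> space M. real n * rho_hat \<beta> c istar n w - real n * \<mu> istar \<le> - (real n powr \<eta> * x)} \<union> (\<Union>i\<in>S. F i)"
    proof (safe)
      fix w assume w: "w \<in> space M" and le: "real n * rho_bar \<beta> c K I n w - real n * \<mu> istar \<le> - (r0 * x)"
        and nF: "w \<notin> (\<Union>i\<in>S. F i)"
      have "\<forall>i\<in>S. real (pull_count I i n w) \<le> a"
        using cover[OF w] nF by force
      from decomp[OF w this] le r0x show "real n * rho_hat \<beta> c istar n w - real n * \<mu> istar \<le> - (real n powr \<eta> * x)"
        by linarith
    qed
  qed
  show ?thesis using up low unfolding Let_def \<Delta>_def[symmetric] An_def[symmetric] r0_def[symmetric] bnd_def[symmetric] by simp
qed

end
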